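(* Let $w>1$ be a fixed-precision binary number represented by $n$ bits, of which the first $m$ correspond to its integer part, and let $b\geq n$. Consider the following algorithm (INV): if $w=1$ return $1$; otherwise set $\hat{x}_0 = 2^{-p}$, where $p\in\mathbb{N}$ is such that $2^p > w \geq 2^{p-1}$, set $s=\lceil \log_2 b\rceil$, and for $i=1,\dots,s$ compute exactly (in fixed precision arithmetic) $x_i = -w\hat{x}_{i-1}^2 + 2\hat{x}_{i-1}$ (Newton's iteration for $1/w$) and let $\hat{x}_i$ be $x_i$ truncated to $b$ bits after the decimal point; return $\hat{x}_s$. Then the returned value $\hat{x}_s$ approximates $\frac{1}{w}$ with error \begin{equation*} \left|\hat{x}_s - \frac{1}{w}\right| \leq \frac{2+ \log_2 b}{2^b}. \end{equation*}
   Context: Numbers are held in fixed precision: an $n$-bit register holding $w=\sum_{j=m-n}^{m-1} w^{(j)}2^j$, with $m$ bits for the integer part and $n-m$ bits for the fractional part. The result of each Newton step is computed exactly using addition and multiplication and then truncated to $b$ bits after the decimal point before being passed to the next step. The corollary follows from a prior result (Theorem B.1 of an earlier paper by the authors) stating that $s$ steps of this truncated iteration give $|\hat{x}_s - \frac{1}{w}| \leq (1/2)^{2^s} + s2^{-b}$. *)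

theory Defs
  imports Complex_Main
begin

definition fixed_repr :: "nat \<Rightarrow> nat \<Rightarrow> real \<Rightarrow> bool" where
  "fixed_repr n m w \<longleftrightarrow> m \<le> n \<and>
     (\<exists>d :: int \<Rightarrow> nat. (\<forall>j. d j \<in> {0, 1}) \<and>
        w = (\<Sum>j\<in>{int m - int n .. int m - 1}. real (d j) * 2 powi j))"

text \<open>Truncation to b bits after the binary point (values are nonnegative here,
  truncation = rounding down).\<close>
definition trunc_bits :: "nat \<Rightarrow> real \<Rightarrow> real" where
  "trunc_bits b x = real_of_int \<lfloor>x * 2 ^ b\<rfloor> / 2 ^ b"

fun newton_hat :: "real \<Rightarrow> nat \<Rightarrow> real \<Rightarrow> nat \<Rightarrow> real" where
  "newton_hat w b x0 0 = x0"
| "newton_hat w b x0 (Suc i) =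
     trunc_bits b (- w * (newton_hat w b x0 i)\<^sup>2 + 2 * newton_hat w b x0 i)"

definition inv_exp :: "real \<Rightarrow> nat" where
  "inv_exp w = (LEAST p :: nat. 2 ^ p > w \<and> w \<ge> 2 powi (int p - 1))"

definition INV :: "real \<Rightarrow> nat \<Rightarrow> real" where
  "INV w b = (if w = 1 then 1
     else newton_hat w b (2 powi (- int (inv_exp w))) (nat \<lceil>log 2 (real b)\<rceil>))"

end

theory Submission
  imports Defs
begin

lemma trunc_le: "trunc_bits b x \<le> x"
proof -
  have "real_of_int \<lfloor>x * 2 ^ b\<rfloor> \<le> x * 2 ^ b" by simp
  then show ?thesis unfolding trunc_bits_def by (simp add: divide_le_eq)
qed

lemma trunc_gt: "trunc_bits b x > x - 1 / 2 ^ b"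
proof -
  have "x * 2 ^ b - 1 < real_of_int \<lfloor>x * 2 ^ b\<rfloor>" by linarith
  then have "(x * 2 ^ b - 1) / 2 ^ b < real_of_int \<lfloor>x * 2 ^ b\<rfloor> / 2 ^ b"
    by (simp add: divide_strict_right_mono)
  then show ?thesis unfolding trunc_bits_def by (simp add: diff_divide_distrib)
qed

lemma trunc_nonneg: "0 \<le> x \<Longrightarrow> 0 \<le> trunc_bits b x"
  unfolding trunc_bits_def by simp

lemma trunc_mono: "x \<le> y \<Longrightarrow> trunc_bits b x \<le> trunc_bits b y"
  unfolding trunc_bits_def
  by (intro divide_right_mono) (auto intro: floor_mono mult_right_mono)

lemma trunc_idem: "trunc_bits b (trunc_bits b x) = trunc_bits b x"
  unfolding trunc_bits_def by simp

lemma step: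
  fixes w y D :: real
  assumes "w > 0" "0 \<le> y" "w * y \<le> 1" "D = w / 2 ^ b"
  defines "y' \<equiv> trunc_bits b (- w * y\<^sup>2 + 2 * y)"
  shows "0 \<le> y'" "w * y' \<le> 1" "1 - w * y' < (1 - w * y)\<^sup>2 + D"
proof -
  have f0: "0 \<le> - w * y\<^sup>2 + 2 * y"
  proof -
    have "- w * y\<^sup>2 + 2 * y = y * (2 - w * y)" by (simp add: power2_eq_square algebra_simps)
    then show ?thesis using assms by simp
  qed
  show "0 \<le> y'" unfolding y'_def using f0 trunc_nonneg by blast
  have le: "y' \<le> - w * y\<^sup>2 + 2 * y" unfolding y'_def by (rule trunc_le)
  have gt: "y' > - w * y\<^sup>2 + 2 * y - 1 / 2 ^ b" unfolding y'_def by (rule trunc_gt)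
  have id: "w * (- w * y\<^sup>2 + 2 * y) = 1 - (1 - w * y)\<^sup>2"
    by (simp add: power2_eq_square algebra_simps)
  have "w * y' \<le> w * (- w * y\<^sup>2 + 2 * y)" using le assms(1) by simp
  then show "w * y' \<le> 1" using id by (smt (verit) zero_le_power2)
  have "w * y' > w * (- w * y\<^sup>2 + 2 * y - 1 / 2 ^ b)" using gt assms(1) by simp
  then show "1 - w * y' < (1 - w * y)\<^sup>2 + D" using id assms(4)
    by (simp add: right_diff_distrib)
qed

lemma main:
  fixes w x0 :: real and b :: nat
  assumes w: "w > 1" and x0: "0 \<le> x0" "w * x0 \<le> 1" "1 - w * x0 \<le> 1/2"
  defines "D \<equiv> w / 2 ^ b"
  shows "0 \<le> newton_hat w b x0 i \<and> w * newton_hat w b x0 i \<le> 1 \<and>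
    1 - w * newton_hat w b x0 i \<le> (1/2) ^ (2 ^ i) + real i * D \<and>
    (i \<ge> 1 \<longrightarrow> 1 - w * newton_hat w b x0 i \<le> 1/4 + D \<and>
       trunc_bits b (newton_hat w b x0 i) = newton_hat w b x0 i)"
proof (induction i)
  case 0
  then show ?case using x0 by simp
next
  case (Suc i)
  define y where "y = newton_hat w b x0 i"
  define y' where "y' = newton_hat w b x0 (Suc i)"
  have y'def: "y' = trunc_bits b (- w * y\<^sup>2 + 2 * y)" unfolding y'_def y_def by simp
  have IH: "0 \<le> y" "w * y \<le> 1" "1 - w * y \<le> (1/2) ^ (2 ^ i) + real i * D"
    "i \<ge> 1 \<Longrightarrow> 1 - w * y \<le> 1/4 + D" "i \<ge> 1 \<Longrightarrow> trunc_bits b y = y"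
    using Suc.IH unfolding y_def by auto
  have wp: "w > 0" using w by simp
  have Dp: "D \<ge> 0" unfolding D_def using w by simp
  have Ddef: "D = w / 2 ^ b" by (simp add: D_def)
  have st: "0 \<le> y'" "w * y' \<le> 1" "1 - w * y' < (1 - w * y)\<^sup>2 + D"
    using step[OF wp IH(1) IH(2) Ddef] unfolding y'def by auto
  have a0: "0 \<le> 1 - w * y" using IH(2) by simp
  have grid: "trunc_bits b y' = y'" unfolding y'def by (rule trunc_idem)
  have mono: "i \<ge> 1 \<Longrightarrow> y \<le> y'"
  proof -
    assume i1: "i \<ge> 1"
    have "y \<le> - w * y\<^sup>2 + 2 * y"
    proof -
      have "- w * y\<^sup>2 + 2 * y = y + y * (1 - w * y)" by (simp add: power2_eq_square algebra_simps)
      then show ?thesis using IH(1) a0 by simp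
    qed
    then have "trunc_bits b y \<le> y'" unfolding y'def by (rule trunc_mono)
    then show "y \<le> y'" using IH(5)[OF i1] by simp
  qed
  have q: "1 - w * y' \<le> 1/4 + D"
  proof (cases "i = 0")
    case True
    then have "1 - w * y \<le> 1/2" using IH(3) by simp
    then have "(1 - w * y)\<^sup>2 \<le> (1/2)\<^sup>2" using a0 by (intro power_mono) auto
    then show ?thesis using st(3) by (simp add: power2_eq_square)
  next
    case False
    then have "y \<le> y'" using mono by simp
    then have "w * y \<le> w * y'" using wp by simp
    then show ?thesis using IH(4) False by simp
  qed
  have bnd: "1 - w * y' \<le> (1/2) ^ (2 ^ Suc i) + real (Suc i) * D"
  proof (cases "i = 0")
    case True
    then show ?thesis using q by (simp add: power2_eq_square)
  next
    case False
    show ?thesis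
    proof (cases "real (Suc i) * D \<ge> 1/2")
      case True
      have "real i * D \<ge> 1/4"
      proof -
        have "real (Suc i) \<le> 2 * real i" using False by simp
        then have "real (Suc i) * D \<le> 2 * real i * D" using Dp by (intro mult_right_mono) auto
        then show ?thesis using True by simp
      qed
      then have "1/4 + D \<le> real (Suc i) * D" by (simp add: algebra_simps)
      moreover have "(0::real) \<le> (1/2) ^ (2 ^ Suc i)" by simp
      ultimately show ?thesis using q by linarith
    next
      case False2: False
      define t :: real where "t = (1/2) ^ (2 ^ i)"
      have t0: "0 \<le> t" unfolding t_def by simp
      have t1: "t \<le> 1/4"
      proof -
        have "2 ^ 1 \<le> (2::nat) ^ i" using False by (intro power_increasing) auto
        then have "(1/2::real) ^ (2 ^ i) \<le> (1/2) ^ 2"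
          by (intro power_decreasing) auto
        moreover have "(1/2::real) ^ 2 = 1/4" by (simp add: power2_eq_square)
        ultimately show ?thesis unfolding t_def by linarith
      qed
      have sD: "real (Suc i) * D = real i * D + D" by (simp add: distrib_right)
      have iD: "real i * D < 1/2" using False2 Dp sD by linarith
      have iD0: "0 \<le> real i * D" using Dp by simp
      have "(1 - w * y)\<^sup>2 \<le> (t + real i * D)\<^sup>2"
        using a0 IH(3) unfolding t_def by (intro power_mono) auto
      also have "\<dots> = t\<^sup>2 + real i * D * (2 * t + real i * D)" by (simp add: power2_eq_square algebra_simps)
      also have "\<dots> \<le> t\<^sup>2 + real i * D * 1"
        using iD0 t1 iD by (intro add_left_mono mult_left_mono) auto
      finally have sq: "(1 - w * y)\<^sup>2 \<le> t\<^sup>2 + real i * D" by simp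
      have tt: "t\<^sup>2 = (1/2) ^ (2 ^ Suc i)"
      proof -
        have "(1/2::real) ^ (2 ^ Suc i) = (1/2) ^ (2 ^ i * 2)"
          by (simp only: power_Suc mult.commute)
        also have "\<dots> = t\<^sup>2" unfolding t_def by (simp only: power_mult)
        finally show ?thesis by (rule sym)
      qed
      have "1 - w * y' \<le> (1 - w * y)\<^sup>2 + D" using st(3) by (rule less_imp_le)
      also have "\<dots> \<le> t\<^sup>2 + real i * D + D" using sq by (rule add_right_mono)
      also have "\<dots> = (1/2) ^ (2 ^ Suc i) + real (Suc i) * D" unfolding tt sD by (rule add.assoc)
      finally show ?thesis .
    qed
  qed
  show ?case using st(1,2) bnd q grid unfolding y'_def by simp
qed

lemma inv_exp_prop:
  assumes "w > (1::real)"
  shows "2 ^ inv_exp w > w \<and> w \<ge> 2 powi (int (inv_exp w) - 1)"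
proof -
  obtain k :: nat where k: "w < 2 ^ k" using real_arch_pow[of 2 w] by auto
  define p where "p = (LEAST p :: nat. w < 2 ^ p)"
  have p1: "w < 2 ^ p" unfolding p_def using k by (rule LeastI)
  have p0: "p \<noteq> 0" using p1 assms by (cases p) auto
  have "p - 1 < p" using p0 by simp
  then have "\<not> w < 2 ^ (p - 1)"
    using not_less_Least[of "p - 1" "\<lambda>q. w < 2 ^ q"] unfolding p_def[symmetric] by blast
  moreover have e: "int p - 1 = int (p - 1)" using p0 by simp
  have "(2::real) powi (int p - 1) = 2 ^ (p - 1)" unfolding e by (rule power_int_of_nat)
  ultimately have "w \<ge> 2 powi (int p - 1)" by (simp only: not_less)
  then have ex: "\<exists>p::nat. 2 ^ p > w \<and> w \<ge> 2 powi (int p - 1)" using p1 by blast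
  show ?thesis unfolding inv_exp_def by (rule LeastI_ex[OF ex])
qed

theorem corollary1:
  fixes w :: real and n m b :: nat
  assumes "fixed_repr n m w"
    and "w > 1"
    and "b \<ge> n"
  shows "\<bar>INV w b - 1 / w\<bar> \<le> (2 + log 2 (real b)) / 2 ^ b"
proof -
  define q where "q = inv_exp w"
  have qp: "2 ^ q > w" "w \<ge> 2 powi (int q - 1)" using inv_exp_prop[OF assms(2)] q_def by auto
  have q0: "q \<ge> 1" using qp(1) assms(2) by (cases q) auto
  define x0 :: real where "x0 = 2 powi (- int q)"
  have x0e: "x0 = 1 / 2 ^ q" unfolding x0_def by (simp add: power_int_minus divide_inverse)
  have hq: "(2::real) powi (int q - 1) = 2 ^ q / 2" using q0
    by (simp add: power_int_diff)
  have x00: "0 \<le> x0" unfolding x0e by simp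
  have x01: "w * x0 \<le> 1" unfolding x0e using qp(1) by (simp add: field_simps)
  have x02: "1 - w * x0 \<le> 1/2" unfolding x0e using qp(2) hq by (simp add: field_simps)
  define s where "s = nat \<lceil>log 2 (real b)\<rceil>"
  define D where "D = w / 2 ^ b"
  define N where "N = newton_hat w b x0 s"
  have INV: "INV w b = N" unfolding INV_def N_def s_def x0_def q_def using assms(2) by simp
  have M: "0 \<le> N" "w * N \<le> 1" "1 - w * N \<le> (1/2) ^ (2 ^ s) + real s * D"
    using main[OF assms(2) x00 x01 x02, of b s] unfolding N_def D_def by auto
  have lg0: "log 2 (real b) \<ge> 0"
    by (cases "b = 0") (auto simp: log_def)
  have sr: "real s = real_of_int \<lceil>log 2 (real b)\<rceil>" unfolding s_def using lg0 by simp
  have s1: "real s \<le> 1 + log 2 (real b)" unfolding sr by linarith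
  have bs: "b \<le> 2 ^ s"
  proof (cases "b = 0")
    case True then show ?thesis by simp
  next
    case False
    have "log 2 (real b) \<le> real s" unfolding sr by linarith
    then have "2 powr log 2 (real b) \<le> 2 powr real s" by simp
    then have "real b \<le> 2 ^ s" using False by (simp add: powr_realpow)
    then have "real b \<le> real (2 ^ s)" by simp
    then show ?thesis by (simp only: of_nat_le_iff)
  qed
  have tb: "(1/2::real) ^ (2 ^ s) \<le> (1/2) ^ b" using bs by (intro power_decreasing) auto
  have wp: "w > 0" using assms(2) by simp
  have abs: "\<bar>N - 1 / w\<bar> = (1 - w * N) / w"
  proof -
    have "N - 1 / w = - ((1 - w * N) / w)" using wp by (simp add: field_simps)
    moreover have "(1 - w * N) / w \<ge> 0" using M(2) wp by simp
    ultimately show ?thesis by (simp only: abs_minus_cancel abs_of_nonneg)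
  qed
  have "(1 - w * N) / w \<le> ((1/2) ^ (2 ^ s) + real s * D) / w"
    using M(3) wp by (simp add: divide_right_mono)
  also have "\<dots> = (1/2) ^ (2 ^ s) / w + real s / 2 ^ b"
    unfolding D_def using wp by (simp add: field_simps)
  also have "\<dots> \<le> (1/2) ^ b + real s / 2 ^ b"
  proof -
    have "(1/2::real) ^ (2 ^ s) / w \<le> (1/2) ^ (2 ^ s)"
      using assms(2) by (simp add: divide_le_eq mult_le_cancel_left1 less_imp_le)
    then show ?thesis by (intro add_right_mono order_trans[OF _ tb])
  qed
  also have "\<dots> = (1 + real s) / 2 ^ b" by (simp add: power_one_over add_divide_distrib)
  also have "\<dots> \<le> (2 + log 2 (real b)) / 2 ^ b"
    using s1 by (intro divide_right_mono) auto
  finally show ?thesis using INV abs by simp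
qed

end
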